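(* Let $\sigma:\mathbb{R}\to\mathbb{R}$ be an increasing odd homeomorphism. The monoid generated by $h_\sigma$ and $v_\sigma$ and the monoid generated by $h_\sigma^{-1}$ and $v_\sigma^{-1}$ are both free (on the respective two generators).
   Context: $h_\sigma(x,y)=(x+\sigma^{-1}(y),y)$ and $v_\sigma(x,y)=(x,\sigma(x)+y)$ are bijections of $\mathbb{R}^2$; the monoid operation is composition. *)

theory Defs
  imports "HOL-Analysis.Analysis"
begin

definition hmap :: "(real \<Rightarrow> real) \<Rightarrow> real \<times> real \<Rightarrow> real \<times> real" where
  "hmap \<sigma> = (\<lambda>(x, y). (x + inv \<sigma> y, y))"

definition vmap :: "(real \<Rightarrow> real) \<Rightarrow> real \<times> real \<Rightarrow> real \<times> real" where
  "vmap \<sigma> = (\<lambda>(x, y). (x, \<sigma> x + y))"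

definition word_eval :: "('a \<Rightarrow> 'a) \<Rightarrow> ('a \<Rightarrow> 'a) \<Rightarrow> bool list \<Rightarrow> 'a \<Rightarrow> 'a" where
  "word_eval f g w = foldr (\<lambda>b acc. (if b then f else g) \<circ> acc) w id"

text \<open>The submonoid generated by f and g is free on f and g iff the evaluation map
  from the free monoid on two letters is injective.\<close>

definition free_monoid_on2 :: "('a \<Rightarrow> 'a) \<Rightarrow> ('a \<Rightarrow> 'a) \<Rightarrow> bool" where
  "free_monoid_on2 f g \<longleftrightarrow> inj (word_eval f g)"

end

theory Submission
  imports Defs
begin

lemma we_Nil[simp]: "word_eval f g [] = id"
  by (simp add: word_eval_def)

lemma we_Cons[simp]: "word_eval f g (b # w) = (if b then f else g) \<circ> word_eval f g w"
  by (simp add: word_eval_def)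

lemma pp_in:
  assumes "f ` (A \<union> B) \<subseteq> A" "g ` (A \<union> B) \<subseteq> B" "p \<in> A \<union> B"
  shows "word_eval f g w p \<in> A \<union> B
     \<and> (w \<noteq> [] \<longrightarrow> (hd w \<longrightarrow> word_eval f g w p \<in> A) \<and> (\<not> hd w \<longrightarrow> word_eval f g w p \<in> B))"
  using assms by (induction w) auto

lemma pingpong:
  assumes fi: "inj f" and gi: "inj g"
    and fA: "f ` (A \<union> B) \<subseteq> A" and gB: "g ` (A \<union> B) \<subseteq> B"
    and disj: "A \<inter> B = {}" and a: "a \<in> A" and b: "b \<in> B"
  shows "free_monoid_on2 f g"
  unfolding free_monoid_on2_def
proof (rule injI)
  fix w1 w2 show "word_eval f g w1 = word_eval f g w2 \<Longrightarrow> w1 = w2"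
  proof (induction w1 arbitrary: w2)
    case Nil
    show ?case
    proof (cases w2)
      case (Cons c w)
      then show ?thesis
      proof (cases c)
        case True
        have "word_eval f g w2 b \<in> A" using pp_in[OF fA gB, of b w2] b Cons True by auto
        moreover have "word_eval f g [] b = b" by simp
        ultimately show ?thesis using Nil.prems[THEN fun_cong, of b] b disj by auto
      next
        case False
        have "word_eval f g w2 a \<in> B" using pp_in[OF fA gB, of a w2] a Cons False by auto
        moreover have "word_eval f g [] a = a" by simp
        ultimately show ?thesis using Nil.prems[THEN fun_cong, of a] a disj by auto
      qed
    qed simp
  next
    case (Cons c1 w1)
    show ?case
    proof (cases w2)
      case Nil
      then show ?thesis
      proof (cases c1)
        case True
        have "word_eval f g (c1#w1) b \<in> A" using pp_in[OF fA gB, of b "c1#w1"] b True by auto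
        then show ?thesis using Cons.prems[THEN fun_cong, of b] Nil b disj by auto
      next
        case False
        have "word_eval f g (c1#w1) a \<in> B" using pp_in[OF fA gB, of a "c1#w1"] a False by auto
        then show ?thesis using Cons.prems[THEN fun_cong, of a] Nil a disj by auto
      qed
    next
      case (Cons c2 w)
      have e: "word_eval f g (c1#w1) a = word_eval f g (c2#w) a" using Cons.prems[THEN fun_cong, of a] Cons by simp
      have c: "c1 = c2"
      proof (rule ccontr)
        assume "c1 \<noteq> c2"
        have "(c1 \<longrightarrow> word_eval f g (c1#w1) a \<in> A) \<and> (\<not> c1 \<longrightarrow> word_eval f g (c1#w1) a \<in> B)"
          using pp_in[OF fA gB, of a "c1#w1"] a by auto
        moreover have "(c2 \<longrightarrow> word_eval f g (c2#w) a \<in> A) \<and> (\<not> c2 \<longrightarrow> word_eval f g (c2#w) a \<in> B)"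
          using pp_in[OF fA gB, of a "c2#w"] a by auto
        ultimately show False using e disj \<open>c1 \<noteq> c2\<close> by (cases c1) auto
      qed
      have ii: "inj (if c1 then f else g)" using fi gi by simp
      have "word_eval f g w1 = word_eval f g w"
      proof
        fix x
        have "(if c1 then f else g) (word_eval f g w1 x) = (if c1 then f else g) (word_eval f g w x)"
          using Cons.prems[THEN fun_cong, of x] Cons c by simp
        then show "word_eval f g w1 x = word_eval f g w x" using ii by (meson injD)
      qed
      then show ?thesis using Cons.IH Cons c by simp
    qed
  qed
qed

theorem lemma1:
  fixes \<sigma> :: "real \<Rightarrow> real"
  assumes homeo: "\<exists>\<tau>. homeomorphism UNIV UNIV \<sigma> \<tau>"
    and incr: "strict_mono \<sigma>"
    and odd: "\<And>x. \<sigma> (- x) = - \<sigma> x"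
  shows "free_monoid_on2 (hmap \<sigma>) (vmap \<sigma>)
     \<and> free_monoid_on2 (inv (hmap \<sigma>)) (inv (vmap \<sigma>))"
proof -
  obtain \<tau> where ht: "homeomorphism UNIV UNIV \<sigma> \<tau>" using homeo by blast
  have st: "\<And>y. \<sigma> (\<tau> y) = y" and ts: "\<And>x. \<tau> (\<sigma> x) = x"
    using ht unfolding homeomorphism_def by auto
  have iv: "inv \<sigma> = \<tau>" by (rule inv_equality) (simp_all add: st ts)
  have s0: "\<sigma> 0 = 0" using odd[of 0] by simp
  have lt: "\<And>x y. \<sigma> x < \<sigma> y \<longleftrightarrow> x < y" using incr by (simp add: strict_mono_less)
  have hm: "hmap \<sigma> = (\<lambda>(x, y). (x + \<tau> y, y))" by (simp add: hmap_def iv)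
  have vm: "vmap \<sigma> = (\<lambda>(x, y). (x, \<sigma> x + y))" by (simp add: vmap_def)
  define hi where "hi = (\<lambda>(x::real, y::real). (x - \<tau> y, y))"
  define vi where "vi = (\<lambda>(x::real, y::real). (x, y - \<sigma> x))"
  have hi1: "\<And>p. hi (hmap \<sigma> p) = p" "\<And>p. hmap \<sigma> (hi p) = p"
    by (auto simp: hm hi_def split: prod.splits)
  have vi1: "\<And>p. vi (vmap \<sigma> p) = p" "\<And>p. vmap \<sigma> (vi p) = p"
    by (auto simp: vm vi_def split: prod.splits)
  have ihm: "inv (hmap \<sigma>) = hi"
    by (rule inv_equality) (simp_all add: hi1)
  have ivm: "inv (vmap \<sigma>) = vi"
    by (rule inv_equality) (simp_all add: vi1)
  have tpos: "\<tau> y > 0 \<longleftrightarrow> y > 0" for y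
    using lt[of 0 "\<tau> y"] s0 st by simp
  have tneg: "\<And>y::real. \<tau> (- y) = - \<tau> y"
  proof -
    fix y :: real
    have "\<sigma> (- \<tau> y) = - y" using odd st by simp
    then have "\<tau> (\<sigma> (- \<tau> y)) = \<tau> (- y)" by simp
    then show "\<tau> (- y) = - \<tau> y" using ts by simp
  qed
  have P1: "free_monoid_on2 (hmap \<sigma>) (vmap \<sigma>)"
  proof (rule pingpong[where A="{(x,y). x > 0 \<and> y > 0 \<and> \<sigma> x > y}"
                        and B="{(x,y). x > 0 \<and> y > 0 \<and> \<sigma> x < y}"
                        and a="(1, \<sigma> 1 / 2)" and b="(1, 2 * \<sigma> 1)"])
    show "inj (hmap \<sigma>)" by (rule inj_on_inverseI) (rule hi1(1))
    show "inj (vmap \<sigma>)" by (rule inj_on_inverseI) (rule vi1(1))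
    have H: "hmap \<sigma> (x, y) \<in> {(x,y). x > 0 \<and> y > 0 \<and> \<sigma> x > y}" if "x > 0" "y > 0" for x y :: real
    proof -
      have "\<tau> y < x + \<tau> y" "\<tau> y > 0" using tpos that by auto
      then have "\<sigma> (\<tau> y) < \<sigma> (x + \<tau> y)" using lt by blast
      then show ?thesis using st that \<open>\<tau> y > 0\<close> by (simp add: hm)
    qed
    have V: "vmap \<sigma> (x, y) \<in> {(x,y). x > 0 \<and> y > 0 \<and> \<sigma> x < y}" if "x > 0" "y > 0" for x y :: real
    proof -
      have "\<sigma> x > 0" using lt[of 0 x] s0 that by simp
      then show ?thesis using that by (simp add: vm)
    qed
    show "hmap \<sigma> ` ({(x,y). x > 0 \<and> y > 0 \<and> \<sigma> x > y} \<union> {(x,y). x > 0 \<and> y > 0 \<and> \<sigma> x < y})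
       \<subseteq> {(x,y). x > 0 \<and> y > 0 \<and> \<sigma> x > y}" 
    proof (rule image_subsetI)
      fix p assume "p \<in> {(x,y). x > 0 \<and> y > 0 \<and> \<sigma> x > y} \<union> {(x,y). x > 0 \<and> y > 0 \<and> \<sigma> x < y}"
      then obtain x y where "p = (x, y)" "x > 0" "y > 0" by (cases p) auto
      then show "hmap \<sigma> p \<in> {(x,y). x > 0 \<and> y > 0 \<and> \<sigma> x > y}" using H by simp
    qed
    show "vmap \<sigma> ` ({(x,y). x > 0 \<and> y > 0 \<and> \<sigma> x > y} \<union> {(x,y). x > 0 \<and> y > 0 \<and> \<sigma> x < y})
       \<subseteq> {(x,y). x > 0 \<and> y > 0 \<and> \<sigma> x < y}" 
    proof (rule image_subsetI)
      fix p assume "p \<in> {(x,y). x > 0 \<and> y > 0 \<and> \<sigma> x > y} \<union> {(x,y). x > 0 \<and> y > 0 \<and> \<sigma> x < y}"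
      then obtain x y where "p = (x, y)" "x > 0" "y > 0" by (cases p) auto
      then show "vmap \<sigma> p \<in> {(x,y). x > 0 \<and> y > 0 \<and> \<sigma> x < y}" using V by simp
    qed
    have "\<sigma> 1 > 0" using lt[of 0 1] s0 by simp
    then show "(1, \<sigma> 1 / 2) \<in> {(x,y). x > 0 \<and> y > 0 \<and> \<sigma> x > y}"
      "(1, 2 * \<sigma> 1) \<in> {(x,y). x > 0 \<and> y > 0 \<and> \<sigma> x < y}" by auto
  qed auto
  have P2: "free_monoid_on2 hi vi"
  proof (rule pingpong[where A="{(x,y). x > 0 \<and> y < 0 \<and> \<sigma> x > - y}"
                        and B="{(x,y). x > 0 \<and> y < 0 \<and> \<sigma> x < - y}"
                        and a="(1, - \<sigma> 1 / 2)" and b="(1, - 2 * \<sigma> 1)"])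
    show "inj hi" by (rule inj_on_inverseI) (rule hi1(2))
    show "inj vi" by (rule inj_on_inverseI) (rule vi1(2))
    have H: "hi (x, y) \<in> {(x,y). x > 0 \<and> y < 0 \<and> \<sigma> x > - y}" if "x > 0" "y < 0" for x y :: real
    proof -
      have "\<tau> (- y) > 0" using tpos that by auto
      then have "\<tau> (- y) < x + \<tau> (- y)" using that by simp
      then have "\<sigma> (\<tau> (- y)) < \<sigma> (x + \<tau> (- y))" using lt by blast
      then have "- y < \<sigma> (x + \<tau> (- y))" using st by simp
      then show ?thesis using tneg \<open>\<tau> (- y) > 0\<close> that by (simp add: hi_def)
    qed
    have V: "vi (x, y) \<in> {(x,y). x > 0 \<and> y < 0 \<and> \<sigma> x < - y}" if "x > 0" "y < 0" for x y :: real
    proof -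
      have "\<sigma> x > 0" using lt[of 0 x] s0 that by simp
      then show ?thesis using that by (simp add: vi_def)
    qed
    show "hi ` ({(x,y). x > 0 \<and> y < 0 \<and> \<sigma> x > - y} \<union> {(x,y). x > 0 \<and> y < 0 \<and> \<sigma> x < - y})
       \<subseteq> {(x,y). x > 0 \<and> y < 0 \<and> \<sigma> x > - y}" 
    proof (rule image_subsetI)
      fix p assume "p \<in> {(x,y). x > 0 \<and> y < 0 \<and> \<sigma> x > - y} \<union> {(x,y). x > 0 \<and> y < 0 \<and> \<sigma> x < - y}"
      then obtain x y where "p = (x, y)" "x > 0" "y < 0" by (cases p) auto
      then show "hi p \<in> {(x,y). x > 0 \<and> y < 0 \<and> \<sigma> x > - y}" using H by simp
    qed
    show "vi ` ({(x,y). x > 0 \<and> y < 0 \<and> \<sigma> x > - y} \<union> {(x,y). x > 0 \<and> y < 0 \<and> \<sigma> x < - y})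
       \<subseteq> {(x,y). x > 0 \<and> y < 0 \<and> \<sigma> x < - y}" 
    proof (rule image_subsetI)
      fix p assume "p \<in> {(x,y). x > 0 \<and> y < 0 \<and> \<sigma> x > - y} \<union> {(x,y). x > 0 \<and> y < 0 \<and> \<sigma> x < - y}"
      then obtain x y where "p = (x, y)" "x > 0" "y < 0" by (cases p) auto
      then show "vi p \<in> {(x,y). x > 0 \<and> y < 0 \<and> \<sigma> x < - y}" using V by simp
    qed
    have "\<sigma> 1 > 0" using lt[of 0 1] s0 by simp
    then show "(1, - \<sigma> 1 / 2) \<in> {(x,y). x > 0 \<and> y < 0 \<and> \<sigma> x > - y}"
      "(1, - 2 * \<sigma> 1) \<in> {(x,y). x > 0 \<and> y < 0 \<and> \<sigma> x < - y}" by auto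
  qed auto
  show ?thesis using P1 P2 ihm ivm by simp
qed

end
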